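(* The class of $\tau_{\mathcal{I}}$-Świątkowski functions coincides with the class of $\tau_\ast$-Świątkowski functions.
   Context: $\tau_\ast=\{U\setminus M: U\text{ Euclidean open},\ M\text{ meager}\}$. $\tau_{\mathcal{I}}$ is the $\mathcal{I}$-density topology: for a set $A\subset\mathbb{R}$ with the Baire property, $x$ is an $\mathcal{I}$-density point of $A$ if for every increasing sequence $(n_m)$ of natural numbers there is a subsequence $(n_{m_p})$ such that the characteristic functions of $n_{m_p}\cdot(A-x)\cap[-1,1]$ converge to $1$ on $[-1,1]$ outside a meager set; $\tau_{\mathcal{I}}$ consists of the sets $A$ with the Baire property every point of which is an $\mathcal{I}$-density point of $A$. For a topology $\sigma$ and $f\colon\mathbb{R}\to\mathbb{R}$, $\mathrm{C}_\sigma(f)$ is the set of points at which $f\colon(\mathbb{R},\sigma)\to\mathbb{R}$ (Euclidean) is continuous, and $f$ is a $\sigma$-Świątkowski function if for all $a,b$ with $f(a)<f(b)$ there exists $x\in\mathrm{C}_\sigma(f)$ strictly between $a$ and $b$ with $f(a)<f(x)<f(b)$. *)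

theory Defs
  imports "HOL-Analysis.Analysis"
begin

definition nowhere_dense :: "real set \<Rightarrow> bool" where
  "nowhere_dense S \<longleftrightarrow> interior (closure S) = {}"

definition meager :: "real set \<Rightarrow> bool" where
  "meager M \<longleftrightarrow> (\<exists>F. countable F \<and> (\<forall>N\<in>F. nowhere_dense N) \<and> M = \<Union>F)"

definition baire_property :: "real set \<Rightarrow> bool" where
  "baire_property A \<longleftrightarrow> (\<exists>U M. open U \<and> meager M \<and> A = (U - M) \<union> (M - U))"

definition tau_star :: "real set set" where
  "tau_star = {U - M | U M. open U \<and> meager M}"

definition scale_shift :: "nat \<Rightarrow> real set \<Rightarrow> real \<Rightarrow> real set" where
  "scale_shift n A x = (\<lambda>a. real n * (a - x)) ` A"

definition I_density_point :: "real set \<Rightarrow> real \<Rightarrow> bool" where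
  "I_density_point A x \<longleftrightarrow>
     (\<forall>n :: nat \<Rightarrow> nat. strict_mono n \<longrightarrow>
        (\<exists>r :: nat \<Rightarrow> nat. strict_mono r \<and>
           (\<exists>M. meager M \<and>
              (\<forall>t\<in>{-1..1} - M.
                 (\<lambda>p. indicator (scale_shift (n (r p)) A x \<inter> {-1..1}) t :: real)
                   \<longlonglongrightarrow> 1))))"

definition tau_I :: "real set set" where
  "tau_I = {A. baire_property A \<and> (\<forall>x\<in>A. I_density_point A x)}"

definition cont_points :: "real set set \<Rightarrow> (real \<Rightarrow> real) \<Rightarrow> real set" where
  "cont_points \<sigma> f = {x. \<forall>W. open W \<and> f x \<in> W \<longrightarrow>
                          (\<exists>V\<in>\<sigma>. x \<in> V \<and> f ` V \<subseteq> W)}"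

definition swiatkowski :: "real set set \<Rightarrow> (real \<Rightarrow> real) \<Rightarrow> bool" where
  "swiatkowski \<sigma> f \<longleftrightarrow>
     (\<forall>a b. f a < f b \<longrightarrow>
        (\<exists>x\<in>cont_points \<sigma> f. min a b < x \<and> x < max a b \<and> f a < f x \<and> f x < f b))"

end

theory Submission
  imports Defs
begin

lemma meager_subset: assumes "meager M" "S \<subseteq> M" shows "meager S"
proof -
  obtain F where F: "countable F" "\<forall>N\<in>F. nowhere_dense N" "M = \<Union>F"
    using assms(1) unfolding meager_def by blast
  have nd: "nowhere_dense (N \<inter> S)" if "N \<in> F" for N
  proof -
    have "interior (closure (N \<inter> S)) \<subseteq> interior (closure N)"
      by (intro interior_mono closure_mono) auto
    then show ?thesis using F(2) that unfolding nowhere_dense_def by blast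
  qed
  have "S = \<Union>((\<lambda>N. N \<inter> S) ` F)" using F(3) assms(2) by auto
  then show ?thesis unfolding meager_def using F(1) nd
    by (intro exI[of _ "(\<lambda>N. N \<inter> S) ` F"]) auto
qed

lemma meager_UN: assumes "countable I" "\<And>i. i \<in> I \<Longrightarrow> meager (A i)"
  shows "meager (\<Union>i\<in>I. A i)"
proof -
  have "\<forall>i\<in>I. \<exists>F. countable F \<and> (\<forall>N\<in>F. nowhere_dense N) \<and> A i = \<Union>F"
    using assms(2) unfolding meager_def by blast
  then obtain F where F: "\<And>i. i\<in>I \<Longrightarrow> countable (F i) \<and> (\<forall>N\<in>F i. nowhere_dense N) \<and> A i = \<Union>(F i)"
    by metis
  show ?thesis unfolding meager_def
    apply (rule exI[of _ "\<Union>i\<in>I. F i"])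
    using F assms(1) by auto
qed

lemma meager_Un: assumes "meager A" "meager B" shows "meager (A \<union> B)"
proof -
  have "A \<union> B = (\<Union>i\<in>{True,False}. if i then A else B)" by auto
  then show ?thesis using meager_UN[of "{True,False}" "\<lambda>i. if i then A else B"] assms by auto
qed

lemma meager_empty: "meager {}"
  unfolding meager_def by (intro exI[of _ "{}"]) auto

lemma meager_nd: "nowhere_dense N \<Longrightarrow> meager N"
  unfolding meager_def by (intro exI[of _ "{N}"]) auto

lemma open_not_meager: assumes "open U" "U \<noteq> {}" shows "\<not> meager U"
proof
  assume "meager U"
  then obtain F where F: "countable F" "\<forall>N\<in>F. nowhere_dense N" "U = \<Union>F"
    unfolding meager_def by blast
  define G where "G = (\<lambda>N. - closure N) ` F"
  have "UNIV \<subseteq> closure (\<Inter>G)"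
  proof (rule Baire)
    show "closed (UNIV::real set)" by simp
    show "countable G" using F(1) G_def by simp
    fix T assume "T \<in> G"
    then obtain N where N: "N \<in> F" "T = - closure N" using G_def by auto
    have "closure T = UNIV" using N F(2) unfolding nowhere_dense_def
      by (simp add: closure_complement)
    then show "openin (top_of_set UNIV) T \<and> UNIV \<subseteq> closure T"
      using N by auto
  qed
  then have "closure (\<Inter>G) = UNIV" by auto
  then have "\<Inter>G \<inter> U \<noteq> {}" using assms
    by (metis closure_iff_nhds_not_empty UNIV_I inf_commute subset_refl all_not_in_conv)
  then obtain y where y: "y \<in> U" "\<forall>T\<in>G. y \<in> T" by auto
  then obtain N where "N \<in> F" "y \<in> N" using F(3) by auto
  then have "y \<in> - closure N" using y G_def by auto
  then show False using \<open>y \<in> N\<close> closure_subset by auto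
qed

lemma nd_affine: assumes "nowhere_dense N" "c \<noteq> 0"
  shows "nowhere_dense ((\<lambda>y. c * (y - x)) ` N)"
proof -
  have lin: "linear ((*) c :: real \<Rightarrow> real)" by (simp add: linear_iff algebra_simps)
  have inj: "inj ((*) c :: real \<Rightarrow> real)" using assms(2) by (auto simp: inj_def)
  have eq: "(\<lambda>y. c * (y - x)) ` N = (*) c ` ((\<lambda>y. y - x) ` N)" by (auto simp: image_image)
  show ?thesis using assms(1) unfolding nowhere_dense_def eq
    by (simp add: closure_injective_linear_image[OF lin inj, symmetric]
       interior_injective_linear_image[OF lin inj] closure_translation_subtract interior_translation_subtract)
qed

lemma meager_affine: assumes "meager M" "c \<noteq> 0"
  shows "meager ((\<lambda>y. c * (y - x)) ` M)"
proof -
  obtain F where F: "countable F" "\<forall>N\<in>F. nowhere_dense N" "M = \<Union>F"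
    using assms(1) unfolding meager_def by blast
  show ?thesis unfolding meager_def
    apply (rule exI[of _ "(\<lambda>N. (\<lambda>y. c * (y - x)) ` N) ` F"])
    using F nd_affine[OF _ assms(2)] by auto
qed

lemma density_nonmeager: assumes "I_density_point A x" "\<delta> > 0"
  shows "\<not> meager (A \<inter> ball x \<delta>)"
proof
  assume mA: "meager (A \<inter> ball x \<delta>)"
  have sm: "strict_mono (\<lambda>m::nat. m)" by (simp add: strict_mono_def)
  obtain r M where r: "strict_mono r" and M: "meager M"
    and lim: "\<forall>t\<in>{-1..1} - M. (\<lambda>p. indicator (scale_shift (r p) A x \<inter> {-1..1}) t :: real) \<longlonglongrightarrow> 1"
    using assms(1) sm unfolding I_density_point_def by blast
  obtain K :: nat where K: "K > 0" "1 / real K < \<delta>"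
    using assms(2) by (metis reals_Archimedean gr0I inverse_eq_divide of_nat_0_less_iff zero_less_Suc divide_less_0_1_iff less_eq_real_def not_less)
  define T where "T p = (\<lambda>a. real (r (p+K)) * (a - x)) ` (A \<inter> ball x \<delta>)" for p
  have rK: "r (p+K) \<ge> p + K" for p using seq_suble[OF r] by blast
  have Tm: "meager (T p)" for p
    unfolding T_def using meager_affine[OF mA, of "real (r (p+K))" x] rK[of p] K(1) by simp
  define B where "B = M \<union> (\<Union>p. T p)"
  have "meager B" unfolding B_def using M Tm by (intro meager_Un meager_UN) auto
  moreover have "ball 0 1 \<subseteq> {-1..(1::real)}" by (auto simp: dist_real_def)
  ultimately have "\<not> {-1..(1::real)} \<subseteq> B"
    using open_not_meager[of "ball (0::real) 1"] meager_subset by (metis open_ball ball_eq_empty not_less zero_less_one subset_trans)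
  then obtain t :: real where t: "t \<in> {-1..1}" "t \<notin> B" by blast
  have z: "indicator (scale_shift (r (p+K)) A x \<inter> {-1..1}) t = (0::real)" for p
  proof -
    have "t \<notin> scale_shift (r (p+K)) A x \<inter> {-1..1}"
    proof
      assume "t \<in> scale_shift (r (p+K)) A x \<inter> {-1..1}"
      then obtain a where a: "a \<in> A" "t = real (r (p+K)) * (a - x)" "\<bar>t\<bar> \<le> 1"
        unfolding scale_shift_def by auto
      have pos: "real (r (p+K)) \<ge> real K" using rK[of p] by simp
      have "real K * \<bar>a - x\<bar> \<le> real (r (p+K)) * \<bar>a - x\<bar>" using pos by (simp add: mult_right_mono)
      also have "\<dots> \<le> 1" using a by (simp add: abs_mult)
      finally have "\<bar>a - x\<bar> \<le> 1 / real K" using K(1) by (simp add: field_simps)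
      then have "a \<in> ball x \<delta>" using K(2) by (simp add: dist_real_def)
      then have "t \<in> T p" unfolding T_def using a by auto
      then show False using t(2) B_def by auto
    qed
    then show ?thesis by simp
  qed
  have "t \<in> {-1..1} - M" using t B_def by auto
  then have "(\<lambda>p. indicator (scale_shift (r p) A x \<inter> {-1..1}) t :: real) \<longlonglongrightarrow> 1" using lim by blast
  then have "(\<lambda>p. indicator (scale_shift (r (p+K)) A x \<inter> {-1..1}) t :: real) \<longlonglongrightarrow> 1"
    by (rule LIMSEQ_ignore_initial_segment)
  then have "(\<lambda>p. 0::real) \<longlonglongrightarrow> 1" using z by simp
  then show False using LIMSEQ_unique tendsto_const by fastforce
qed

lemma tau_star_sub: assumes "V \<in> tau_star" shows "V \<in> tau_I"
proof -
  obtain U M where V: "V = U - M" "open U" "meager M" using assms unfolding tau_star_def by blast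
  have bp: "baire_property V" unfolding baire_property_def
    apply (rule exI[of _ U], rule exI[of _ "M \<inter> U"])
    using V meager_subset[OF V(3)] by auto
  have "I_density_point V x" if xV: "x \<in> V" for x
    unfolding I_density_point_def
  proof (intro allI impI)
    fix n :: "nat \<Rightarrow> nat" assume n: "strict_mono n"
    define Mb where "Mb = (\<Union>p. (\<lambda>y. real (n (p+1)) * (y - x)) ` M)"
    have "meager Mb" unfolding Mb_def
    proof (intro meager_UN)
      fix p :: nat
      have "n (p+1) \<ge> p+1" using seq_suble[OF n] by blast
      then show "meager ((\<lambda>y. real (n (p+1)) * (y - x)) ` M)"
        by (intro meager_affine[OF V(3)]) auto
    qed auto
    obtain d where d: "d > 0" "ball x d \<subseteq> U" using V xV open_contains_ball by blast
    obtain K :: nat where K: "K > 0" "1 / real K < d"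
      using d(1) by (metis reals_Archimedean gr0I inverse_eq_divide of_nat_0_less_iff zero_less_Suc divide_less_0_1_iff less_eq_real_def not_less)
    have conv: "(\<lambda>p. indicator (scale_shift (n p) V x \<inter> {-1..1}) t :: real) \<longlonglongrightarrow> 1"
      if t: "t \<in> {-1..1} - Mb" for t
    proof (rule tendsto_eventually, rule eventually_sequentiallyI[of K])
      fix p assume p: "K \<le> p"
      have np: "n p \<ge> p" using seq_suble[OF n] by blast
      then have np': "real (n p) \<ge> real K" "real (n p) > 0" using p K(1) by auto
      define a where "a = x + t / real (n p)"
      have ta: "t = real (n p) * (a - x)" unfolding a_def using np' by simp
      have "\<bar>a - x\<bar> = \<bar>t\<bar> / real (n p)" unfolding a_def using np' by (simp add: abs_divide)
      also have "\<dots> \<le> 1 / real (n p)" using t np' by (intro divide_right_mono) auto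
      also have "\<dots> \<le> 1 / real K" using np' K(1) by (intro divide_left_mono) auto
      finally have "a \<in> ball x d" using K(2) by (simp add: dist_real_def)
      then have aU: "a \<in> U" using d by auto
      have aM: "a \<notin> M"
      proof
        assume "a \<in> M"
        have "p - 1 + 1 = p" using p K(1) by simp
        then have "t \<in> (\<lambda>y. real (n (p - 1 + 1)) * (y - x)) ` M" using ta \<open>a \<in> M\<close> by auto
        then show False using t Mb_def by blast
      qed
      have "t \<in> scale_shift (n p) V x \<inter> {-1..1}"
        unfolding scale_shift_def using ta aU aM V(1) t by auto
      then show "indicator (scale_shift (n p) V x \<inter> {-1..1}) t = (1::real)" by simp
    qed
    show "\<exists>r. strict_mono r \<and> (\<exists>M. meager M \<and> (\<forall>t\<in>{-1..1} - M.
        (\<lambda>p. indicator (scale_shift (n (r p)) V x \<inter> {-1..1}) t :: real) \<longlonglongrightarrow> 1))"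
      apply (rule exI[of _ "\<lambda>p. p"])
      using conv \<open>meager Mb\<close> by (auto simp: strict_mono_def)
  qed
  then show ?thesis unfolding tau_I_def using bp by auto
qed

lemma baire_part: assumes "V \<in> tau_I" "x \<in> V" "c < x" "x < d"
  shows "\<exists>U M. open U \<and> U \<noteq> {} \<and> U \<subseteq> {c<..<d} \<and> meager M \<and> U - M \<subseteq> V"
proof -
  obtain U0 M0 where U0: "open U0" "meager M0" "V = (U0 - M0) \<union> (M0 - U0)"
    and dens: "I_density_point V x"
    using assms(1,2) unfolding tau_I_def baire_property_def by blast
  define U where "U = U0 \<inter> {c<..<d}"
  have "U \<noteq> {}"
  proof
    assume U: "U = {}"
    define \<delta> where "\<delta> = min (x - c) (d - x)"
    have "\<delta> > 0" using assms \<delta>_def by auto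
    have "V \<inter> ball x \<delta> \<subseteq> M0"
    proof
      fix v assume v: "v \<in> V \<inter> ball x \<delta>"
      then have "v \<in> {c<..<d}" using \<delta>_def by (auto simp: dist_real_def)
      then have "v \<notin> U0" using U U_def by auto
      then show "v \<in> M0" using v U0(3) by auto
    qed
    then show False using density_nonmeager[OF dens \<open>\<delta> > 0\<close>] meager_subset[OF U0(2)] by blast
  qed
  then show ?thesis using U0 unfolding U_def
    by (intro exI[of _ "U0 \<inter> {c<..<d}"] exI[of _ M0]) auto
qed

lemma step: assumes sw: "swiatkowski tau_I f" and uv: "u < v" and e: "e > 0"
  shows "\<exists>U M. open U \<and> U \<noteq> {} \<and> U \<subseteq> {u<..<v} \<and> meager M \<and>
           (\<forall>y\<in>U-M. \<forall>y'\<in>U-M. \<bar>f y - f y'\<bar> < e)"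
proof (cases "\<forall>c\<in>{u<..<v}. \<forall>d\<in>{u<..<v}. f c = f d")
  case True
  have "\<forall>y\<in>{u<..<v}-{}. \<forall>y'\<in>{u<..<v}-{}. \<bar>f y - f y'\<bar> < e"
  proof (intro ballI)
    fix y y' assume "y \<in> {u<..<v}-{}" "y' \<in> {u<..<v}-{}"
    then have "f y = f y'" using True by blast
    then show "\<bar>f y - f y'\<bar> < e" using e by simp
  qed
  moreover have "open {u<..<v}" "{u<..<v} \<noteq> {}" using uv by auto
  ultimately show ?thesis using meager_empty by blast
next
  case False
  then obtain c d where cd: "c \<in> {u<..<v}" "d \<in> {u<..<v}" "f c \<noteq> f d" by blast
  obtain p q where pq: "p \<in> {u<..<v}" "q \<in> {u<..<v}" "f p < f q"
  proof (cases "f c < f d")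
    case True then show ?thesis using that cd by blast
  next
    case False then have "f d < f c" using cd(3) by linarith
    then show ?thesis using that cd by blast
  qed
  obtain x where x: "x \<in> cont_points tau_I f" "min p q < x" "x < max p q" "f p < f x" "f x < f q"
    using sw[unfolded swiatkowski_def, rule_format, OF pq(3)] by blast
  obtain V where V: "V \<in> tau_I" "x \<in> V" "f ` V \<subseteq> ball (f x) (e/2)"
    proof -
    have "open (ball (f x) (e/2)) \<and> f x \<in> ball (f x) (e/2)" using e by simp
    then show ?thesis using x(1)[unfolded cont_points_def, simplified, rule_format] that by blast
  qed
  obtain U M where UM: "open U" "U \<noteq> {}" "U \<subseteq> {min p q<..<max p q}" "meager M" "U - M \<subseteq> V"
    using baire_part[OF V(1,2) x(2,3)] by blast
  have "U \<subseteq> {u<..<v}"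
  proof
    fix w assume "w \<in> U"
    then have "min p q < w" "w < max p q" using UM(3) by auto
    then show "w \<in> {u<..<v}" using pq(1,2) by (auto simp: min_def max_def split: if_splits)
  qed
  moreover have "\<forall>y\<in>U-M. \<forall>y'\<in>U-M. \<bar>f y - f y'\<bar> < e"
  proof (intro ballI)
    fix y y' assume "y \<in> U - M" "y' \<in> U - M"
    then have "f y \<in> ball (f x) (e/2)" "f y' \<in> ball (f x) (e/2)" using UM(5) V(3) by blast+
    then show "\<bar>f y - f y'\<bar> < e" unfolding mem_ball dist_real_def abs_less_iff by linarith
  qed
  ultimately show ?thesis using UM by blast
qed

definition Fam :: "(real \<Rightarrow> real) \<Rightarrow> real \<Rightarrow> real set set" where
  "Fam f e = {U. open U \<and> (\<exists>M. meager M \<and> (\<forall>y\<in>U-M. \<forall>y'\<in>U-M. \<bar>f y - f y'\<bar> < e))}"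

lemma Fam_dense: assumes sw: "swiatkowski tau_I f" and e: "e > 0"
  shows "meager (- \<Union>(Fam f e))"
proof (rule meager_nd)
  have op: "open (\<Union>(Fam f e))" unfolding Fam_def by auto
  have "interior (- \<Union>(Fam f e)) = {}"
  proof (rule ccontr)
    assume "interior (- \<Union>(Fam f e)) \<noteq> {}"
    then obtain y where "y \<in> interior (- \<Union>(Fam f e))" by auto
    then obtain r where r: "r > 0" "ball y r \<subseteq> - \<Union>(Fam f e)"
      by (meson mem_interior)
    obtain U M where UM: "open U" "U \<noteq> {}" "U \<subseteq> {y - r<..<y + r}" "meager M"
      "\<forall>y\<in>U-M. \<forall>y'\<in>U-M. \<bar>f y - f y'\<bar> < e"
      using step[OF sw _ e, of "y - r" "y + r"] r(1) by auto
    have "U \<in> Fam f e" unfolding Fam_def using UM by blast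
    moreover have "U \<subseteq> ball y r"
    proof
      fix w assume "w \<in> U"
      then have "y - r < w" "w < y + r" using UM(3) by auto
      then show "w \<in> ball y r" by (simp add: dist_real_def abs_less_iff)
    qed
    ultimately show False using r(2) UM(2) by blast
  qed
  then show "nowhere_dense (- \<Union>(Fam f e))"
    unfolding nowhere_dense_def using op by (simp add: closed_def)
qed

lemma main_dir: assumes sw: "swiatkowski tau_I f" shows "swiatkowski tau_star f"
  unfolding swiatkowski_def
proof (intro allI impI)
  fix a b assume ab: "f a < f b"
  obtain x where x: "x \<in> cont_points tau_I f" "min a b < x" "x < max a b" "f a < f x" "f x < f b"
    using sw[unfolded swiatkowski_def, rule_format, OF ab] by blast
  define \<epsilon> where "\<epsilon> = min (f x - f a) (f b - f x)"
  have "\<epsilon> > 0" using x \<epsilon>_def by auto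
  obtain V where V: "V \<in> tau_I" "x \<in> V" "f ` V \<subseteq> ball (f x) \<epsilon>"
    proof -
    have "open (ball (f x) \<epsilon>) \<and> f x \<in> ball (f x) \<epsilon>" using \<open>\<epsilon> > 0\<close> by simp
    then show ?thesis using x(1)[unfolded cont_points_def, simplified, rule_format] that by blast
  qed
  obtain U0 M0 where U0: "open U0" "U0 \<noteq> {}" "U0 \<subseteq> {min a b<..<max a b}" "meager M0" "U0 - M0 \<subseteq> V"
    using baire_part[OF V(1,2) x(2,3)] by blast
  define e where "e k = 1 / real (Suc k)" for k
  have epos: "e k > 0" for k unfolding e_def by simp
  have "\<forall>k. \<exists>C. C \<subseteq> Fam f (e k) \<and> countable C \<and> \<Union>C = \<Union>(Fam f (e k))"
  proof
    fix k
    have "\<And>S. S \<in> Fam f (e k) \<Longrightarrow> open S" unfolding Fam_def by auto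
    then obtain C where "C \<subseteq> Fam f (e k)" "countable C" "\<Union>C = \<Union>(Fam f (e k))"
      using Lindelof by metis
    then show "\<exists>C. C \<subseteq> Fam f (e k) \<and> countable C \<and> \<Union>C = \<Union>(Fam f (e k))" by blast
  qed
  then obtain C where C: "\<And>k. C k \<subseteq> Fam f (e k)" "\<And>k. countable (C k)"
    "\<And>k. \<Union>(C k) = \<Union>(Fam f (e k))" by metis
  define Mf where "Mf k U = (SOME M. meager M \<and> (\<forall>y\<in>U-M. \<forall>y'\<in>U-M. \<bar>f y - f y'\<bar> < e k))" for k U
  have Mf: "meager (Mf k U) \<and> (\<forall>y\<in>U-Mf k U. \<forall>y'\<in>U-Mf k U. \<bar>f y - f y'\<bar> < e k)"
    if "U \<in> C k" for k U
  proof -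
    have "U \<in> Fam f (e k)" using C(1) that by blast
    then have "\<exists>M. meager M \<and> (\<forall>y\<in>U-M. \<forall>y'\<in>U-M. \<bar>f y - f y'\<bar> < e k)" unfolding Fam_def by blast
    then show ?thesis unfolding Mf_def by (rule someI_ex)
  qed
  define Bad where "Bad = M0 \<union> (\<Union>k. - \<Union>(Fam f (e k))) \<union> (\<Union>k. \<Union>U\<in>C k. Mf k U)"
  have "meager Bad" unfolding Bad_def
    apply (intro meager_Un meager_UN U0(4) Fam_dense[OF sw epos])
    using C(2) Mf by auto
  then have "\<not> U0 \<subseteq> Bad" using open_not_meager[OF U0(1,2)] meager_subset by blast
  then obtain z where z: "z \<in> U0" "z \<notin> Bad" by blast
  have zV: "z \<in> V" using z U0(5) Bad_def by auto
  have fz: "f z \<in> ball (f x) \<epsilon>" using zV V(3) by auto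
  have zc: "z \<in> cont_points tau_star f" unfolding cont_points_def
  proof (intro CollectI allI impI)
    fix W assume W: "open W \<and> f z \<in> W"
    then obtain \<delta> where \<delta>: "\<delta> > 0" "ball (f z) \<delta> \<subseteq> W" using open_contains_ball by blast
    obtain k where k: "inverse (real (Suc k)) < \<delta>" using reals_Archimedean \<delta>(1) by blast
    have "z \<in> \<Union>(Fam f (e k))" using z Bad_def by auto
    then obtain U where U: "U \<in> C k" "z \<in> U" using C(3)[of k] by auto
    have zM: "z \<notin> Mf k U" using z U Bad_def by auto
    have opU: "open U" using C(1) U(1) unfolding Fam_def by auto
    have "U - Mf k U \<in> tau_star" unfolding tau_star_def using opU Mf[OF U(1)] by blast
    moreover have "f ` (U - Mf k U) \<subseteq> W"
    proof
      fix w assume "w \<in> f ` (U - Mf k U)"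
      then obtain y where y: "y \<in> U - Mf k U" "w = f y" by auto
      have "\<bar>f y - f z\<bar> < e k" using Mf[OF U(1)] y U zM by blast
      then have "w \<in> ball (f z) \<delta>" using y k unfolding e_def by (auto simp: dist_real_def inverse_eq_divide)
      then show "w \<in> W" using \<delta> by auto
    qed
    ultimately show "\<exists>V\<in>tau_star. z \<in> V \<and> f ` V \<subseteq> W" using U zM by blast
  qed
  show "\<exists>x\<in>cont_points tau_star f. min a b < x \<and> x < max a b \<and> f a < f x \<and> f x < f b"
    apply (rule bexI[OF _ zc])
    using z(1) U0(3) fz \<epsilon>_def by (auto simp: dist_real_def)
qed

lemma mono_sw: assumes "\<sigma>1 \<subseteq> \<sigma>2" "swiatkowski \<sigma>1 f" shows "swiatkowski \<sigma>2 f"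
proof -
  have "cont_points \<sigma>1 f \<subseteq> cont_points \<sigma>2 f" using assms(1) unfolding cont_points_def by blast
  then show ?thesis using assms(2) unfolding swiatkowski_def by blast
qed

theorem mainTheorem16:
  "{f :: real \<Rightarrow> real. swiatkowski tau_I f} = {f. swiatkowski tau_star f}"
  using main_dir mono_sw[of tau_star tau_I] tau_star_sub by blast

end
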